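(* Let $\mathcal{S}=\langle\mathcal{L},\vdash\rangle$ be a logical structure and $\varrho,\sigma\subseteq\mathcal{P}(\mathcal{L})\times\mathcal{L}$. (i) $(\vdash^\varrho)^\sigma\,\subseteq\,\vdash^\varrho$, with equality if $\varrho\subseteq\sigma$. (ii) If $\mathcal{S}$ is monotonic, then $(\vdash^\varrho)^\sigma\,\subseteq\,\vdash^\sigma$. (iii) If $\varrho\subseteq\sigma$, then $(\vdash^\varrho)^\sigma\,\subseteq\,\vdash^\sigma$. (iv) If $\vdash^\sigma\,\subseteq\,\vdash^\varrho$, then $\vdash^\sigma\,\subseteq\,(\vdash^\varrho)^\sigma$. (v) If $\varrho\subseteq\sigma$, then $\vdash^\varrho\,=\,\vdash^\sigma$ iff $(\vdash^\varrho)^\sigma\,=\,\vdash^\sigma$. Moreover, statements (i)–(v) remain true when $\vdash^\varrho$, $\vdash^\sigma$ and $(\vdash^\varrho)^\sigma$ are replaced throughout by the pure companions $\vdash^{p\varrho}$, $\vdash^{p\sigma}$ and $(\vdash^{p\varrho})^{p\sigma}$ respectively.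
   Context: A logical structure is a pair $\langle\mathcal{L},\vdash\rangle$ with $\mathcal{L}$ a set and $\vdash\subseteq\mathcal{P}(\mathcal{L})\times\mathcal{L}$ arbitrary; it is monotonic if $\Gamma\vdash\alpha$ and $\Gamma\subseteq\Sigma$ imply $\Sigma\vdash\alpha$. For $\varrho\subseteq\mathcal{P}(\mathcal{L})\times\mathcal{L}$: $\Gamma\vdash^\varrho\alpha$ iff there is $\Delta\subseteq\Gamma$ with $(\Delta,\alpha)\in\varrho$ and $\Delta\vdash\alpha$; $\Gamma\vdash^{p\varrho}\alpha$ iff there is a nonempty $\Delta\subseteq\Gamma$ with $(\Delta,\alpha)\in\varrho$ and $\Delta\vdash\alpha$. $(\vdash^\varrho)^\sigma$ denotes the $\sigma$-companion of $\langle\mathcal{L},\vdash^\varrho\rangle$, and $(\vdash^{p\varrho})^{p\sigma}$ the pure $\sigma$-companion of $\langle\mathcal{L},\vdash^{p\varrho}\rangle$. *)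

theory Defs
  imports Main
begin

text \<open>A logical structure over the language given by the type 'a is a relation
  between sets of formulas and formulas.\<close>
type_synonym 'a cons_rel = "('a set \<times> 'a) set"

definition monotonic :: "'a cons_rel \<Rightarrow> bool" where
  "monotonic D \<longleftrightarrow> (\<forall>\<Gamma> \<Sigma> \<alpha>. (\<Gamma>, \<alpha>) \<in> D \<and> \<Gamma> \<subseteq> \<Sigma> \<longrightarrow> (\<Sigma>, \<alpha>) \<in> D)"

definition companion :: "'a cons_rel \<Rightarrow> 'a cons_rel \<Rightarrow> 'a cons_rel" where
  "companion D \<rho> = {(\<Gamma>, \<alpha>). \<exists>\<Delta>. \<Delta> \<subseteq> \<Gamma> \<and> (\<Delta>, \<alpha>) \<in> \<rho> \<and> (\<Delta>, \<alpha>) \<in> D}"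

definition pure_companion :: "'a cons_rel \<Rightarrow> 'a cons_rel \<Rightarrow> 'a cons_rel" where
  "pure_companion D \<rho> = {(\<Gamma>, \<alpha>). \<exists>\<Delta>. \<Delta> \<noteq> {} \<and> \<Delta> \<subseteq> \<Gamma> \<and> (\<Delta>, \<alpha>) \<in> \<rho> \<and> (\<Delta>, \<alpha>) \<in> D}"

end

theory Submission
  imports Defs
begin

lemma l1: "companion (companion D \<rho>) \<sigma> \<subseteq> companion D \<rho>"
  unfolding companion_def by blast
lemma l2: "\<rho> \<subseteq> \<sigma> \<Longrightarrow> companion (companion D \<rho>) \<sigma> = companion D \<rho>"
  unfolding companion_def by blast
lemma l3: "monotonic D \<Longrightarrow> companion (companion D \<rho>) \<sigma> \<subseteq> companion D \<sigma>"
  unfolding companion_def monotonic_def by blast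
lemma l4: "\<rho> \<subseteq> \<sigma> \<Longrightarrow> companion (companion D \<rho>) \<sigma> \<subseteq> companion D \<sigma>"
  unfolding companion_def by blast
lemma l5: "companion D \<sigma> \<subseteq> companion D \<rho> \<Longrightarrow> companion D \<sigma> \<subseteq> companion (companion D \<rho>) \<sigma>"
proof
  fix p assume h: "companion D \<sigma> \<subseteq> companion D \<rho>" and p: "p \<in> companion D \<sigma>"
  obtain G a where pe: "p = (G, a)" by fastforce
  from p pe obtain E where E: "E \<subseteq> G" "(E, a) \<in> \<sigma>" "(E, a) \<in> D" unfolding companion_def by blast
  have "(E, a) \<in> companion D \<sigma>" using E unfolding companion_def by blast
  hence "(E, a) \<in> companion D \<rho>" using h by blast
  thus "p \<in> companion (companion D \<rho>) \<sigma>" using E pe unfolding companion_def by blast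
qed
lemma p1: "pure_companion (pure_companion D \<rho>) \<sigma> \<subseteq> pure_companion D \<rho>"
  unfolding pure_companion_def by blast
lemma p2: "\<rho> \<subseteq> \<sigma> \<Longrightarrow> pure_companion (pure_companion D \<rho>) \<sigma> = pure_companion D \<rho>"
  unfolding pure_companion_def by blast
lemma p3: "monotonic D \<Longrightarrow> pure_companion (pure_companion D \<rho>) \<sigma> \<subseteq> pure_companion D \<sigma>"
proof
  fix p assume m: "monotonic D" and p: "p \<in> pure_companion (pure_companion D \<rho>) \<sigma>"
  obtain G a where pe: "p = (G, a)" by fastforce
  from p pe obtain E where E: "E \<noteq> {}" "E \<subseteq> G" "(E, a) \<in> \<sigma>" "(E, a) \<in> pure_companion D \<rho>"
    unfolding pure_companion_def by blast
  from E(4) obtain F where F: "F \<subseteq> E" "(F, a) \<in> D" unfolding pure_companion_def by blast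
  have "(E, a) \<in> D" using m F unfolding monotonic_def by blast
  thus "p \<in> pure_companion D \<sigma>" using E pe unfolding pure_companion_def by blast
qed
lemma p4: "\<rho> \<subseteq> \<sigma> \<Longrightarrow> pure_companion (pure_companion D \<rho>) \<sigma> \<subseteq> pure_companion D \<sigma>"
  unfolding pure_companion_def by blast
lemma p5: "pure_companion D \<sigma> \<subseteq> pure_companion D \<rho> \<Longrightarrow> pure_companion D \<sigma> \<subseteq> pure_companion (pure_companion D \<rho>) \<sigma>"
proof
  fix p assume h: "pure_companion D \<sigma> \<subseteq> pure_companion D \<rho>" and p: "p \<in> pure_companion D \<sigma>"
  obtain G a where pe: "p = (G, a)" by fastforce
  from p pe obtain E where E: "E \<noteq> {}" "E \<subseteq> G" "(E, a) \<in> \<sigma>" "(E, a) \<in> D" unfolding pure_companion_def by blast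
  have "(E, a) \<in> pure_companion D \<sigma>" using E unfolding pure_companion_def by blast
  hence "(E, a) \<in> pure_companion D \<rho>" using h by blast
  thus "p \<in> pure_companion (pure_companion D \<rho>) \<sigma>" using E pe unfolding pure_companion_def by blast
qed

lemma m1: "\<rho> \<subseteq> \<sigma> \<Longrightarrow> companion D \<rho> \<subseteq> companion D \<sigma>"
  unfolding companion_def by blast
lemma m2: "\<rho> \<subseteq> \<sigma> \<Longrightarrow> pure_companion D \<rho> \<subseteq> pure_companion D \<sigma>"
  unfolding pure_companion_def by blast

theorem theorem3p10:
  fixes D \<rho> \<sigma> :: "'a cons_rel"
  shows
   "(companion (companion D \<rho>) \<sigma> \<subseteq> companion D \<rho>
      \<and> (\<rho> \<subseteq> \<sigma> \<longrightarrow> companion (companion D \<rho>) \<sigma> = companion D \<rho>))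
    \<and> (monotonic D \<longrightarrow> companion (companion D \<rho>) \<sigma> \<subseteq> companion D \<sigma>)
    \<and> (\<rho> \<subseteq> \<sigma> \<longrightarrow> companion (companion D \<rho>) \<sigma> \<subseteq> companion D \<sigma>)
    \<and> (companion D \<sigma> \<subseteq> companion D \<rho> \<longrightarrow> companion D \<sigma> \<subseteq> companion (companion D \<rho>) \<sigma>)
    \<and> (\<rho> \<subseteq> \<sigma> \<longrightarrow>
        (companion D \<rho> = companion D \<sigma> \<longleftrightarrow> companion (companion D \<rho>) \<sigma> = companion D \<sigma>))
    \<and> (pure_companion (pure_companion D \<rho>) \<sigma> \<subseteq> pure_companion D \<rho>
      \<and> (\<rho> \<subseteq> \<sigma> \<longrightarrow> pure_companion (pure_companion D \<rho>) \<sigma> = pure_companion D \<rho>))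
    \<and> (monotonic D \<longrightarrow> pure_companion (pure_companion D \<rho>) \<sigma> \<subseteq> pure_companion D \<sigma>)
    \<and> (\<rho> \<subseteq> \<sigma> \<longrightarrow> pure_companion (pure_companion D \<rho>) \<sigma> \<subseteq> pure_companion D \<sigma>)
    \<and> (pure_companion D \<sigma> \<subseteq> pure_companion D \<rho> \<longrightarrow>
         pure_companion D \<sigma> \<subseteq> pure_companion (pure_companion D \<rho>) \<sigma>)
    \<and> (\<rho> \<subseteq> \<sigma> \<longrightarrow>
        (pure_companion D \<rho> = pure_companion D \<sigma> \<longleftrightarrow>
         pure_companion (pure_companion D \<rho>) \<sigma> = pure_companion D \<sigma>))"
proof -
  have v1: "\<rho> \<subseteq> \<sigma> \<Longrightarrow>
        (companion D \<rho> = companion D \<sigma> \<longleftrightarrow> companion (companion D \<rho>) \<sigma> = companion D \<sigma>)"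
  proof -
    assume h: "\<rho> \<subseteq> \<sigma>"
    have "companion (companion D \<rho>) \<sigma> = companion D \<rho>" using l2[OF h] .
    thus ?thesis by (simp only:)
  qed
  have v2: "\<rho> \<subseteq> \<sigma> \<Longrightarrow>
        (pure_companion D \<rho> = pure_companion D \<sigma> \<longleftrightarrow>
         pure_companion (pure_companion D \<rho>) \<sigma> = pure_companion D \<sigma>)"
  proof -
    assume h: "\<rho> \<subseteq> \<sigma>"
    have "pure_companion (pure_companion D \<rho>) \<sigma> = pure_companion D \<rho>" using p2[OF h] .
    thus ?thesis by (simp only:)
  qed
  show ?thesis
    apply (intro conjI impI)
    by (assumption | rule l1 l2 l3 l4 l5 p1 p2 p3 p4 p5 v1 v2)+
qed

end
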